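(* Let $\mathcal C=(A,\bar A,B,\bar B,C,\bar C,D,\bar D,E,\bar E,F,\bar F)$ be a coefficient tuple and $\mathcal W=(Q,\bar Q,S,\bar S,R,\bar R,G,\bar G)$ a weight tuple satisfying Assumption (S); let $\mathcal C_1,\mathcal W_1$ be as in the context. Then: (1) the first Riccati equation (for $P$) of $\mathrm{Ric}(\mathcal C_1,\mathcal W_1)$ is the same equation as the first Riccati equation of $\mathrm{Ric}(\mathcal C,\mathcal W)$; (2) the second Riccati equation (for $\Pi$) of $\mathrm{Ric}(\mathcal C_1,\mathcal W_1)$ is the same equation as the second Riccati equation of $\mathrm{Ric}(\mathcal C,\mathcal W)$. That is, the terminal conditions coincide and, for every $t$ and every $P_t,\Pi_t\in\mathbb S^n$ for which $\Sigma_{0t}$ and $\Sigma_{1t}$ are invertible, the corresponding left-hand side expressions coincide.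
   Context: Fix $T>0$, integers $n,m\ge1$, a nonempty $\Theta\subseteq\mathbb R\setminus\{0\}$ and a $\sigma$-finite measure $\nu$ on $\Theta$ with $\int_\Theta(1\wedge\theta^2)\nu(d\theta)<\infty$. $\mathbb S^k$: symmetric $k\times k$ matrices; $M\ge\alpha I$ means $M-\alpha I$ positive semidefinite. $L^\infty(0,T;M)$: bounded functions; $L^2_\nu(M)$: deterministic $r:[0,T]\times\Theta\to M$ with $\sup_t\int_\Theta|r(t,\theta)|^2\nu(d\theta)<\infty$. A coefficient tuple $\mathcal C=(A,\bar A,B,\bar B,C,\bar C,D,\bar D,E,\bar E,F,\bar F)$: deterministic $A,\bar A,C,\bar C\in L^\infty(0,T;\mathbb R^{n\times n})$, $B,\bar B,D,\bar D\in L^\infty(0,T;\mathbb R^{n\times m})$, $E,\bar E\in L^2_\nu(\mathbb R^{n\times n})$, $F,\bar F\in L^2_\nu(\mathbb R^{n\times m})$. A weight tuple $\mathcal W=(Q,\bar Q,S,\bar S,R,\bar R,G,\bar G)$: $Q,\bar Q\in L^\infty(0,T;\mathbb S^n)$, $R,\bar R\in L^\infty(0,T;\mathbb S^m)$, $S,\bar S\in L^\infty(0,T;\mathbb R^{n\times m})$, $G,\bar G\in\mathbb S^n$. Riccati system $\mathrm{Ric}(\mathcal C,\mathcal W)$: for deterministic $P,\Pi:[0,T]\to\mathbb S^n$, with $\Sigma_{0t}=R_t+D_t^\top P_tD_t+\int_\Theta F_{t,\theta}^\top P_tF_{t,\theta}\nu(d\theta)$, $\Sigma_{1t}=R_t+\bar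 R_t+(D_t+\bar D_t)^\top P_t(D_t+\bar D_t)+\int_\Theta(F_{t,\theta}+\bar F_{t,\theta})^\top P_t(F_{t,\theta}+\bar F_{t,\theta})\nu(d\theta)$: $\dot P_t+P_tA_t+A_t^\top P_t+C_t^\top P_tC_t+\int_\Theta E_{t,\theta}^\top P_tE_{t,\theta}\nu(d\theta)+Q_t-\big(S_t+P_tB_t+C_t^\top P_tD_t+\int_\Theta E_{t,\theta}^\top P_tF_{t,\theta}\nu(d\theta)\big)\Sigma_{0t}^{-1}\big(S_t^\top+B_t^\top P_t+D_t^\top P_tC_t+\int_\Theta F_{t,\theta}^\top P_tE_{t,\theta}\nu(d\theta)\big)=0$, $P_T=G$; $\dot\Pi_t+\Pi_t(A_t+\bar A_t)+(A_t+\bar A_t)^\top\Pi_t+(C_t+\bar C_t)^\top P_t(C_t+\bar C_t)+\int_\Theta(E_{t,\theta}+\bar E_{t,\theta})^\top P_t(E_{t,\theta}+\bar E_{t,\theta})\nu(d\theta)+Q_t+\bar Q_t-\big[(S_t+\bar S_t)+\Pi_t(B_t+\bar B_t)+(C_t+\bar C_t)^\top P_t(D_t+\bar D_t)+\int_\Theta(E_{t,\theta}+\bar E_{t,\theta})^\top P_t(F_{t,\theta}+\bar F_{t,\theta})\nu(d\theta)\big]\Sigma_{1t}^{-1}\big[(S_t+\bar S_t)^\top+(B_t+\bar B_t)^\top\Pi_t+(D_t+\bar D_t)^\top P_t(C_t+\bar C_t)+\int_\Theta(F_{t,\theta}+\bar F_{t,\theta})^\top P_t(E_{t,\theta}+\bar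 E_{t,\theta})\nu(d\theta)\big]=0$, $\Pi_T=G+\bar G$. Assumption (S) for $\mathcal W$: there is $\alpha_0>0$ such that for all $t$: $R_t\ge\alpha_0I$, $R_t+\bar R_t\ge\alpha_0I$, $Q_t-S_tR_t^{-1}S_t^\top\ge0$, $Q_t+\bar Q_t-(S_t+\bar S_t)(R_t+\bar R_t)^{-1}(S_t+\bar S_t)^\top\ge0$, $G\ge0$, $G+\bar G\ge0$. Under Assumption (S), define $A_1=A-BR^{-1}S^\top$, $\bar A_1=A+\bar A-(B+\bar B)(R+\bar R)^{-1}(S+\bar S)^\top-A_1$, $C_1=C-DR^{-1}S^\top$, $\bar C_1=C+\bar C-(D+\bar D)(R+\bar R)^{-1}(S+\bar S)^\top-C_1$, $E_{1t,\theta}=E_{t,\theta}-F_{t,\theta}R_t^{-1}S_t^\top$, $\bar E_{1t,\theta}=E_{t,\theta}+\bar E_{t,\theta}-(F_{t,\theta}+\bar F_{t,\theta})(R_t+\bar R_t)^{-1}(S_t+\bar S_t)^\top-E_{1t,\theta}$, $Q_1=Q-SR^{-1}S^\top$, $\bar Q_1=Q+\bar Q-(S+\bar S)(R+\bar R)^{-1}(S+\bar S)^\top-Q_1$; $\mathcal C_1=(A_1,\bar A_1,B,\bar B,C_1,\bar C_1,D,\bar D,E_1,\bar E_1,F,\bar F)$ and $\mathcal W_1=(Q_1,\bar Q_1,0,0,R,\bar R,G,\bar G)$. *)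

theory Defs
  imports "HOL-Analysis.Analysis"
begin

text \<open>Matrices are rendered as Cartesian matrices: an n x n real matrix is
  real^'n^'n, an n x m matrix is real^'m^'n (rows indexed by 'n).
  Time-dependent coefficients are functions of t :: real (only t in [0,T] matters),
  jump coefficients are functions of (t, theta).  The measure nu lives on
  Theta = space nu, a subset of the reals.\<close>

record ('n::finite, 'm::finite) coef =
  cA  :: "real \<Rightarrow> real^'n^'n"
  cAb :: "real \<Rightarrow> real^'n^'n"
  cB  :: "real \<Rightarrow> real^'m^'n"
  cBb :: "real \<Rightarrow> real^'m^'n"
  cC  :: "real \<Rightarrow> real^'n^'n"
  cCb :: "real \<Rightarrow> real^'n^'n"
  cD  :: "real \<Rightarrow> real^'m^'n"
  cDb :: "real \<Rightarrow> real^'m^'n"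
  cE  :: "real \<Rightarrow> real \<Rightarrow> real^'n^'n"
  cEb :: "real \<Rightarrow> real \<Rightarrow> real^'n^'n"
  cF  :: "real \<Rightarrow> real \<Rightarrow> real^'m^'n"
  cFb :: "real \<Rightarrow> real \<Rightarrow> real^'m^'n"

record ('n::finite, 'm::finite) wt =
  wQ  :: "real \<Rightarrow> real^'n^'n"
  wQb :: "real \<Rightarrow> real^'n^'n"
  wS  :: "real \<Rightarrow> real^'m^'n"
  wSb :: "real \<Rightarrow> real^'m^'n"
  wR  :: "real \<Rightarrow> real^'m^'m"
  wRb :: "real \<Rightarrow> real^'m^'m"
  wG  :: "real^'n^'n"
  wGb :: "real^'n^'n"

definition symmetric_mat :: "real^'k^'k \<Rightarrow> bool" where
  "symmetric_mat M \<longleftrightarrow> transpose M = M"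

definition psd :: "real^'k^'k \<Rightarrow> bool" where
  "psd M \<longleftrightarrow> (\<forall>x. 0 \<le> x \<bullet> (M *v x))"

definition loewner_ge :: "real^'k^'k \<Rightarrow> real^'k^'k \<Rightarrow> bool" where
  "loewner_ge M N \<longleftrightarrow> psd (M - N)"

definition Linf :: "real \<Rightarrow> (real \<Rightarrow> 'a::real_normed_vector) \<Rightarrow> bool" where
  "Linf T X \<longleftrightarrow> bounded (X ` {0..T})"

definition L2nu :: "real measure \<Rightarrow> real \<Rightarrow> (real \<Rightarrow> real \<Rightarrow> 'a::euclidean_space) \<Rightarrow> bool" where
  "L2nu \<nu> T X \<longleftrightarrow>
     (\<lambda>(t,\<theta>). X t \<theta>) \<in> borel_measurable (restrict_space lborel {0..T} \<Otimes>\<^sub>M \<nu>) \<and>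
     (\<exists>K::real. \<forall>t\<in>{0..T}. (\<integral>\<^sup>+\<theta>. ennreal ((norm (X t \<theta>))\<^sup>2) \<partial>\<nu>) \<le> ennreal K)"

definition coef_tuple :: "real measure \<Rightarrow> real \<Rightarrow> ('n::finite,'m::finite) coef \<Rightarrow> bool" where
  "coef_tuple \<nu> T c \<longleftrightarrow>
     Linf T (cA c) \<and> Linf T (cAb c) \<and> Linf T (cC c) \<and> Linf T (cCb c) \<and>
     Linf T (cB c) \<and> Linf T (cBb c) \<and> Linf T (cD c) \<and> Linf T (cDb c) \<and>
     L2nu \<nu> T (cE c) \<and> L2nu \<nu> T (cEb c) \<and> L2nu \<nu> T (cF c) \<and> L2nu \<nu> T (cFb c)"

definition weight_tuple :: "real \<Rightarrow> ('n::finite,'m::finite) wt \<Rightarrow> bool" where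
  "weight_tuple T w \<longleftrightarrow>
     Linf T (wQ w) \<and> Linf T (wQb w) \<and> Linf T (wR w) \<and> Linf T (wRb w) \<and>
     Linf T (wS w) \<and> Linf T (wSb w) \<and>
     (\<forall>t\<in>{0..T}. symmetric_mat (wQ w t) \<and> symmetric_mat (wQb w t) \<and>
                  symmetric_mat (wR w t) \<and> symmetric_mat (wRb w t)) \<and>
     symmetric_mat (wG w) \<and> symmetric_mat (wGb w)"

definition assumption_S :: "real \<Rightarrow> ('n::finite,'m::finite) wt \<Rightarrow> bool" where
  "assumption_S T w \<longleftrightarrow> (\<exists>\<alpha>0>0. \<forall>t\<in>{0..T}.
     loewner_ge (wR w t) (\<alpha>0 *\<^sub>R mat 1) \<and>
     loewner_ge (wR w t + wRb w t) (\<alpha>0 *\<^sub>R mat 1) \<and>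
     psd (wQ w t - wS w t ** matrix_inv (wR w t) ** transpose (wS w t)) \<and>
     psd (wQ w t + wQb w t - (wS w t + wSb w t) ** matrix_inv (wR w t + wRb w t)
            ** transpose (wS w t + wSb w t)) \<and>
     psd (wG w) \<and> psd (wG w + wGb w))"

definition Sig0 :: "real measure \<Rightarrow> ('n::finite,'m::finite) coef \<Rightarrow> ('n,'m) wt \<Rightarrow> real
                    \<Rightarrow> real^'n^'n \<Rightarrow> real^'m^'m" where
  "Sig0 \<nu> c w t P = wR w t + transpose (cD c t) ** P ** cD c t
     + (LINT \<theta>|\<nu>. transpose (cF c t \<theta>) ** P ** cF c t \<theta>)"

definition Sig1 :: "real measure \<Rightarrow> ('n::finite,'m::finite) coef \<Rightarrow> ('n,'m) wt \<Rightarrow> real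
                    \<Rightarrow> real^'n^'n \<Rightarrow> real^'m^'m" where
  "Sig1 \<nu> c w t P = wR w t + wRb w t
     + transpose (cD c t + cDb c t) ** P ** (cD c t + cDb c t)
     + (LINT \<theta>|\<nu>. transpose (cF c t \<theta> + cFb c t \<theta>) ** P ** (cF c t \<theta> + cFb c t \<theta>))"

text \<open>Left-hand side of the first Riccati equation at time t, with Pd standing for dP/dt.\<close>
definition ric1 :: "real measure \<Rightarrow> ('n::finite,'m::finite) coef \<Rightarrow> ('n,'m) wt \<Rightarrow> real
                    \<Rightarrow> real^'n^'n \<Rightarrow> real^'n^'n \<Rightarrow> real^'n^'n" where
  "ric1 \<nu> c w t Pd P =
     Pd + P ** cA c t + transpose (cA c t) ** P + transpose (cC c t) ** P ** cC c t
     + (LINT \<theta>|\<nu>. transpose (cE c t \<theta>) ** P ** cE c t \<theta>) + wQ w t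
     - (wS w t + P ** cB c t + transpose (cC c t) ** P ** cD c t
          + (LINT \<theta>|\<nu>. transpose (cE c t \<theta>) ** P ** cF c t \<theta>))
       ** matrix_inv (Sig0 \<nu> c w t P)
       ** (transpose (wS w t) + transpose (cB c t) ** P + transpose (cD c t) ** P ** cC c t
          + (LINT \<theta>|\<nu>. transpose (cF c t \<theta>) ** P ** cE c t \<theta>))"

text \<open>Left-hand side of the second Riccati equation at time t, with Pid standing for d\<Pm>/dt.\<close>
definition ric2 :: "real measure \<Rightarrow> ('n::finite,'m::finite) coef \<Rightarrow> ('n,'m) wt \<Rightarrow> real
                    \<Rightarrow> real^'n^'n \<Rightarrow> real^'n^'n \<Rightarrow> real^'n^'n \<Rightarrow> real^'n^'n" where
  "ric2 \<nu> c w t Pid P Pm =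
     Pid + Pm ** (cA c t + cAb c t) + transpose (cA c t + cAb c t) ** Pm
     + transpose (cC c t + cCb c t) ** P ** (cC c t + cCb c t)
     + (LINT \<theta>|\<nu>. transpose (cE c t \<theta> + cEb c t \<theta>) ** P ** (cE c t \<theta> + cEb c t \<theta>))
     + wQ w t + wQb w t
     - ((wS w t + wSb w t) + Pm ** (cB c t + cBb c t)
          + transpose (cC c t + cCb c t) ** P ** (cD c t + cDb c t)
          + (LINT \<theta>|\<nu>. transpose (cE c t \<theta> + cEb c t \<theta>) ** P ** (cF c t \<theta> + cFb c t \<theta>)))
       ** matrix_inv (Sig1 \<nu> c w t P)
       ** (transpose (wS w t + wSb w t) + transpose (cB c t + cBb c t) ** Pm
          + transpose (cD c t + cDb c t) ** P ** (cC c t + cCb c t)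
          + (LINT \<theta>|\<nu>. transpose (cF c t \<theta> + cFb c t \<theta>) ** P ** (cE c t \<theta> + cEb c t \<theta>)))"

definition coef1 :: "('n::finite,'m::finite) coef \<Rightarrow> ('n,'m) wt \<Rightarrow> ('n,'m) coef" where
  "coef1 c w =
   (let A1 = (\<lambda>t. cA c t - cB c t ** matrix_inv (wR w t) ** transpose (wS w t));
        C1 = (\<lambda>t. cC c t - cD c t ** matrix_inv (wR w t) ** transpose (wS w t));
        E1 = (\<lambda>t \<theta>. cE c t \<theta> - cF c t \<theta> ** matrix_inv (wR w t) ** transpose (wS w t))
    in \<lparr> cA = A1,
         cAb = (\<lambda>t. cA c t + cAb c t - (cB c t + cBb c t) ** matrix_inv (wR w t + wRb w t)
                     ** transpose (wS w t + wSb w t) - A1 t),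
         cB = cB c, cBb = cBb c,
         cC = C1,
         cCb = (\<lambda>t. cC c t + cCb c t - (cD c t + cDb c t) ** matrix_inv (wR w t + wRb w t)
                     ** transpose (wS w t + wSb w t) - C1 t),
         cD = cD c, cDb = cDb c,
         cE = E1,
         cEb = (\<lambda>t \<theta>. cE c t \<theta> + cEb c t \<theta> - (cF c t \<theta> + cFb c t \<theta>)
                     ** matrix_inv (wR w t + wRb w t) ** transpose (wS w t + wSb w t) - E1 t \<theta>),
         cF = cF c, cFb = cFb c \<rparr>)"

definition wt1 :: "('n::finite,'m::finite) wt \<Rightarrow> ('n,'m) wt" where
  "wt1 w =
   (let Q1 = (\<lambda>t. wQ w t - wS w t ** matrix_inv (wR w t) ** transpose (wS w t))
    in \<lparr> wQ = Q1,
         wQb = (\<lambda>t. wQ w t + wQb w t - (wS w t + wSb w t) ** matrix_inv (wR w t + wRb w t)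
                     ** transpose (wS w t + wSb w t) - Q1 t),
         wS = (\<lambda>t. 0), wSb = (\<lambda>t. 0),
         wR = wR w, wRb = wRb w,
         wG = wG w, wGb = wGb w \<rparr>)"

end

theory Submission
  imports Defs
begin

lemma mm_add_r: "((A::real^'n^'m) + B) ** C = A ** C + B ** C"
  by (vector matrix_matrix_mult_def sum.distrib[symmetric] field_simps)
lemma mm_diff_r: "((A::real^'n^'m) - B) ** C = A ** C - B ** C"
  by (vector matrix_matrix_mult_def sum_subtractf[symmetric] field_simps)
lemma mm_diff_l: "(A::real^'n^'m) ** (B - C) = A ** B - A ** C"
  by (vector matrix_matrix_mult_def sum_subtractf[symmetric] field_simps)
lemma tr_add: "transpose ((A::real^'n^'m) + B) = transpose A + transpose B"
  by (simp add: transpose_def vec_eq_iff)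
lemma tr_diff: "transpose ((A::real^'n^'m) - B) = transpose A - transpose B"
  by (simp add: transpose_def vec_eq_iff)
lemma tr_zero: "transpose (0::real^'n^'m) = 0"
  by (simp add: transpose_def vec_eq_iff)
lemma tr_scale: "transpose (c *\<^sub>R (A::real^'n^'m)) = c *\<^sub>R transpose A"
  by (simp add: transpose_def vec_eq_iff)

lemmas mm_simps = matrix_add_ldistrib mm_add_r mm_diff_r mm_diff_l tr_add tr_diff tr_zero
  matrix_transpose_mul matrix_mul_assoc

lemma bl_r: "bounded_linear (\<lambda>X::real^'n^'m. X ** (K::real^'p^'n))"
  unfolding linear_conv_bounded_linear[symmetric]
  by (rule linearI) (simp_all add: mm_add_r scalar_matrix_assoc)

lemma bl_l: "bounded_linear (\<lambda>X::real^'p^'n. (K::real^'n^'m) ** X)"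
  unfolding linear_conv_bounded_linear[symmetric]
  by (rule linearI) (simp_all add: matrix_add_ldistrib matrix_scalar_ac scalar_matrix_assoc)

lemma bb_P: "bounded_bilinear (\<lambda>(X::real^'m^'n) (Y::real^'p^'n). transpose X ** (P::real^'n^'n) ** Y)"
  unfolding bilinear_conv_bounded_bilinear[symmetric] bilinear_def
proof (intro conjI allI)
  fix X :: "real^'m^'n"
  show "linear (\<lambda>Y::real^'p^'n. transpose X ** P ** Y)"
    by (rule linearI) (simp_all add: matrix_add_ldistrib matrix_scalar_ac scalar_matrix_assoc[symmetric])
next
  fix Y :: "real^'p^'n"
  show "linear (\<lambda>X::real^'m^'n. transpose X ** P ** Y)"
    by (rule linearI) (simp_all add: mm_add_r tr_add tr_scale scalar_matrix_assoc[symmetric])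
qed

lemma int_r: "integrable M X \<Longrightarrow> (LINT x|M. X x ** (K::real^'p^'n)) = (LINT x|M. (X x::real^'n^'m)) ** K"
  using integral_bounded_linear[OF bl_r] by blast
lemma int_l: "integrable M X \<Longrightarrow> (LINT x|M. (K::real^'n^'m) ** X x) = K ** (LINT x|M. (X x::real^'p^'n))"
  using integral_bounded_linear[OF bl_l] by blast
lemma ib_r: "integrable M X \<Longrightarrow> integrable M (\<lambda>x. (X x::real^'n^'m) ** (K::real^'p^'n))"
  using integrable_bounded_linear[OF bl_r] by blast
lemma ib_l: "integrable M X \<Longrightarrow> integrable M (\<lambda>x. (K::real^'n^'m) ** (X x::real^'p^'n))"
  using integrable_bounded_linear[OF bl_l] by blast

lemma int_expand:
  fixes E :: "real \<Rightarrow> real^'n^'n" and F :: "real \<Rightarrow> real^'m^'n" and K :: "real^'n^'m"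
  assumes iEE: "integrable M (\<lambda>x. transpose (E x) ** P ** E x)"
    and iEF: "integrable M (\<lambda>x. transpose (E x) ** P ** F x)"
    and iFE: "integrable M (\<lambda>x. transpose (F x) ** P ** E x)"
    and iFF: "integrable M (\<lambda>x. transpose (F x) ** P ** F x)"
  shows "(LINT x|M. transpose (E x - F x ** K) ** P ** (E x - F x ** K))
      = (LINT x|M. transpose (E x) ** P ** E x) - (LINT x|M. transpose (E x) ** P ** F x) ** K
        - transpose K ** (LINT x|M. transpose (F x) ** P ** E x)
        + transpose K ** (LINT x|M. transpose (F x) ** P ** F x) ** K"
    and "(LINT x|M. transpose (E x - F x ** K) ** P ** F x)
      = (LINT x|M. transpose (E x) ** P ** F x) - transpose K ** (LINT x|M. transpose (F x) ** P ** F x)"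
    and "(LINT x|M. transpose (F x) ** P ** (E x - F x ** K))
      = (LINT x|M. transpose (F x) ** P ** E x) - (LINT x|M. transpose (F x) ** P ** F x) ** K"
proof -
  have p1: "transpose (E x - F x ** K) ** P ** (E x - F x ** K) =
     transpose (E x) ** P ** E x - (transpose (E x) ** P ** F x) ** K
     - transpose K ** (transpose (F x) ** P ** E x) + (transpose K ** (transpose (F x) ** P ** F x)) ** K" for x
    by (simp add: mm_simps)
  have p2: "transpose (E x - F x ** K) ** P ** F x =
     transpose (E x) ** P ** F x - transpose K ** (transpose (F x) ** P ** F x)" for x
    by (simp add: mm_simps)
  have p3: "transpose (F x) ** P ** (E x - F x ** K) =
     transpose (F x) ** P ** E x - (transpose (F x) ** P ** F x) ** K" for x
    by (simp add: mm_simps)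
  show "(LINT x|M. transpose (E x - F x ** K) ** P ** (E x - F x ** K))
      = (LINT x|M. transpose (E x) ** P ** E x) - (LINT x|M. transpose (E x) ** P ** F x) ** K
        - transpose K ** (LINT x|M. transpose (F x) ** P ** E x)
        + transpose K ** (LINT x|M. transpose (F x) ** P ** F x) ** K"
    unfolding p1
    by (simp add: iEE iEF iFE iFF ib_r ib_l int_r int_l)
  show "(LINT x|M. transpose (E x - F x ** K) ** P ** F x)
      = (LINT x|M. transpose (E x) ** P ** F x) - transpose K ** (LINT x|M. transpose (F x) ** P ** F x)"
    unfolding p2 by (simp add: iEE iEF iFE iFF ib_r ib_l int_r int_l)
  show "(LINT x|M. transpose (F x) ** P ** (E x - F x ** K))
      = (LINT x|M. transpose (F x) ** P ** E x) - (LINT x|M. transpose (F x) ** P ** F x) ** K"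
    unfolding p3 by (simp add: iEE iEF iFE iFF ib_r ib_l int_r int_l)
qed

lemma L2nu_sec:
  assumes "L2nu \<nu> T X" "t \<in> {0..T}"
  shows "X t \<in> borel_measurable \<nu>" "(\<integral>\<^sup>+\<theta>. ennreal ((norm (X t \<theta>))\<^sup>2) \<partial>\<nu>) < \<infinity>"
proof -
  from assms(1) have m: "(\<lambda>(t,\<theta>). X t \<theta>) \<in> borel_measurable (restrict_space lborel {0..T} \<Otimes>\<^sub>M \<nu>)"
    and b: "\<exists>K::real. \<forall>t\<in>{0..T}. (\<integral>\<^sup>+\<theta>. ennreal ((norm (X t \<theta>))\<^sup>2) \<partial>\<nu>) \<le> ennreal K"
    unfolding L2nu_def by auto
  have "t \<in> space (restrict_space lborel {0..T})" using assms(2) by simp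
  from measurable_Pair2[OF m this] show "X t \<in> borel_measurable \<nu>" by simp
  from b obtain K :: real where Kle: "(\<integral>\<^sup>+\<theta>. ennreal ((norm (X t \<theta>))\<^sup>2) \<partial>\<nu>) \<le> ennreal K"
    using assms(2) by blast
  have "ennreal K < \<infinity>" by simp
  then show "(\<integral>\<^sup>+\<theta>. ennreal ((norm (X t \<theta>))\<^sup>2) \<partial>\<nu>) < \<infinity>"
    by (rule le_less_trans[OF Kle])
qed

lemma inv_psd:
  fixes R :: "real^'m^'m"
  assumes "loewner_ge R (a *\<^sub>R mat 1)" "a > 0"
  shows "invertible R"
proof -
  have "\<forall>x. R *v x = 0 \<longrightarrow> x = 0"
  proof (intro allI impI)
    fix x assume "R *v x = 0"
    have "0 \<le> x \<bullet> ((R - a *\<^sub>R mat 1) *v x)" using assms(1) unfolding loewner_ge_def psd_def by blast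
    also have "(R - a *\<^sub>R mat 1) *v x = R *v x - a *\<^sub>R x"
      by (simp add: matrix_vector_mult_diff_rdistrib scaleR_matrix_vector_assoc[symmetric])
    finally have "0 \<le> - a * (x \<bullet> x)" using \<open>R *v x = 0\<close> by simp
    with assms(2) have "x \<bullet> x \<le> 0" by (simp add: mult_le_0_iff)
    then have "x \<bullet> x = 0" using inner_ge_zero[of x] by linarith
    then show "x = 0" by simp
  qed
  then show ?thesis
    unfolding invertible_left_inverse matrix_left_invertible_ker[symmetric] .
qed

lemma minv:
  assumes "invertible (A::real^'m^'m)"
  shows "A ** matrix_inv A = mat 1" "matrix_inv A ** A = mat 1"
  using someI_ex[OF assms[unfolded invertible_def]] unfolding matrix_inv_def by auto

lemma bil_integrable:
  fixes X :: "'x \<Rightarrow> 'a::euclidean_space" and Y :: "'x \<Rightarrow> 'b::euclidean_space"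
    and h :: "'a \<Rightarrow> 'b \<Rightarrow> 'c::euclidean_space"
  assumes h: "bounded_bilinear h"
    and mX: "X \<in> borel_measurable M" and mY: "Y \<in> borel_measurable M"
    and iX: "(\<integral>\<^sup>+x. ennreal ((norm (X x))\<^sup>2) \<partial>M) < \<infinity>"
    and iY: "(\<integral>\<^sup>+x. ennreal ((norm (Y x))\<^sup>2) \<partial>M) < \<infinity>"
  shows "integrable M (\<lambda>x. h (X x) (Y x))"
proof (rule integrableI_bounded)
  show "(\<lambda>x. h (X x) (Y x)) \<in> borel_measurable M"
    by (rule borel_measurable_continuous_Pair[OF mX mY])
       (intro bounded_bilinear.continuous_on[OF h] continuous_on_fst continuous_on_snd continuous_on_id)
  obtain K where K: "K > 0" "\<And>a b. norm (h a b) \<le> norm a * norm b * K"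
    using bounded_bilinear.pos_bounded[OF h] by blast
  have pt: "norm (h (X x) (Y x)) \<le> K * ((norm (X x))\<^sup>2 + (norm (Y x))\<^sup>2)" for x
  proof -
    have "norm (X x) * norm (Y x) \<le> (norm (X x))\<^sup>2 + (norm (Y x))\<^sup>2"
      by (smt (verit) norm_ge_zero power2_eq_square mult_mono mult_nonneg_nonneg)
    then show ?thesis using K(2)[of "X x" "Y x"] K(1)
      by (smt (verit) mult.commute mult_le_cancel_left_pos)
  qed
  have "(\<integral>\<^sup>+x. ennreal (norm (h (X x) (Y x))) \<partial>M)
      \<le> (\<integral>\<^sup>+x. ennreal K * (ennreal ((norm (X x))\<^sup>2) + ennreal ((norm (Y x))\<^sup>2)) \<partial>M)"
  proof (intro nn_integral_mono)
    fix x
    have "ennreal (norm (h (X x) (Y x))) \<le> ennreal (K * ((norm (X x))\<^sup>2 + (norm (Y x))\<^sup>2))"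
      by (rule ennreal_leI[OF pt])
    also have "\<dots> = ennreal K * (ennreal ((norm (X x))\<^sup>2) + ennreal ((norm (Y x))\<^sup>2))"
      using K(1) by (simp add: ennreal_mult ennreal_plus)
    finally show "ennreal (norm (h (X x) (Y x))) \<le> ennreal K * (ennreal ((norm (X x))\<^sup>2) + ennreal ((norm (Y x))\<^sup>2))" .
  qed
  also have "\<dots> = ennreal K * ((\<integral>\<^sup>+x. ennreal ((norm (X x))\<^sup>2) \<partial>M) + (\<integral>\<^sup>+x. ennreal ((norm (Y x))\<^sup>2) \<partial>M))"
    proof -
      have [measurable]: "X \<in> borel_measurable M" "Y \<in> borel_measurable M" using mX mY by auto
      have "(\<integral>\<^sup>+x. ennreal ((norm (X x))\<^sup>2) + ennreal ((norm (Y x))\<^sup>2) \<partial>M) = (\<integral>\<^sup>+x. ennreal ((norm (X x))\<^sup>2) \<partial>M) + (\<integral>\<^sup>+x. ennreal ((norm (Y x))\<^sup>2) \<partial>M)"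
        by (rule nn_integral_add) measurable
      moreover have "(\<integral>\<^sup>+x. ennreal K * (ennreal ((norm (X x))\<^sup>2) + ennreal ((norm (Y x))\<^sup>2)) \<partial>M) = ennreal K * (\<integral>\<^sup>+x. ennreal ((norm (X x))\<^sup>2) + ennreal ((norm (Y x))\<^sup>2) \<partial>M)"
        by (rule nn_integral_cmult) measurable
      ultimately show ?thesis by simp
    qed
  also have "\<dots> < \<infinity>" using iX iY by (simp add: ennreal_mult_less_top)
  finally show "(\<integral>\<^sup>+x. ennreal (norm (h (X x) (Y x))) \<partial>M) < \<infinity>" .
qed

lemma sq_add:
  fixes X Y :: "'x \<Rightarrow> 'a::euclidean_space"
  assumes mX: "X \<in> borel_measurable M" and mY: "Y \<in> borel_measurable M"
    and iX: "(\<integral>\<^sup>+x. ennreal ((norm (X x))\<^sup>2) \<partial>M) < \<infinity>"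
    and iY: "(\<integral>\<^sup>+x. ennreal ((norm (Y x))\<^sup>2) \<partial>M) < \<infinity>"
  shows "(\<integral>\<^sup>+x. ennreal ((norm (X x + Y x))\<^sup>2) \<partial>M) < \<infinity>"
proof -
  have pt: "(norm (X x + Y x))\<^sup>2 \<le> 2 * ((norm (X x))\<^sup>2 + (norm (Y x))\<^sup>2)" for x
  proof -
    have "norm (X x + Y x) \<le> norm (X x) + norm (Y x)" by (rule norm_triangle_ineq)
    hence "(norm (X x + Y x))\<^sup>2 \<le> (norm (X x) + norm (Y x))\<^sup>2"
      by (simp add: power_mono)
    also have "\<dots> \<le> 2 * ((norm (X x))\<^sup>2 + (norm (Y x))\<^sup>2)"
      by (simp add: power2_sum) (smt (verit) sum_squares_bound)
    finally show ?thesis .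
  qed
  have "(\<integral>\<^sup>+x. ennreal ((norm (X x + Y x))\<^sup>2) \<partial>M)
      \<le> (\<integral>\<^sup>+x. ennreal 2 * (ennreal ((norm (X x))\<^sup>2) + ennreal ((norm (Y x))\<^sup>2)) \<partial>M)"
  proof (intro nn_integral_mono)
    fix x
    have "ennreal ((norm (X x + Y x))\<^sup>2) \<le> ennreal (2 * ((norm (X x))\<^sup>2 + (norm (Y x))\<^sup>2))"
      by (rule ennreal_leI[OF pt])
    also have "\<dots> = ennreal 2 * (ennreal ((norm (X x))\<^sup>2) + ennreal ((norm (Y x))\<^sup>2))"
      by (simp add: ennreal_mult ennreal_plus)
    finally show "ennreal ((norm (X x + Y x))\<^sup>2) \<le> ennreal 2 * (ennreal ((norm (X x))\<^sup>2) + ennreal ((norm (Y x))\<^sup>2))" .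
  qed
  also have "\<dots> = ennreal 2 * ((\<integral>\<^sup>+x. ennreal ((norm (X x))\<^sup>2) \<partial>M) + (\<integral>\<^sup>+x. ennreal ((norm (Y x))\<^sup>2) \<partial>M))"
    proof -
      have [measurable]: "X \<in> borel_measurable M" "Y \<in> borel_measurable M" using mX mY by auto
      have "(\<integral>\<^sup>+x. ennreal ((norm (X x))\<^sup>2) + ennreal ((norm (Y x))\<^sup>2) \<partial>M) = (\<integral>\<^sup>+x. ennreal ((norm (X x))\<^sup>2) \<partial>M) + (\<integral>\<^sup>+x. ennreal ((norm (Y x))\<^sup>2) \<partial>M)"
        by (rule nn_integral_add) measurable
      moreover have "(\<integral>\<^sup>+x. ennreal 2 * (ennreal ((norm (X x))\<^sup>2) + ennreal ((norm (Y x))\<^sup>2)) \<partial>M) = ennreal 2 * (\<integral>\<^sup>+x. ennreal ((norm (X x))\<^sup>2) + ennreal ((norm (Y x))\<^sup>2) \<partial>M)"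
        by (rule nn_integral_cmult) measurable
      ultimately show ?thesis by simp
    qed
  also have "\<dots> < \<infinity>" using iX iY by (simp add: ennreal_mult_less_top)
  finally show ?thesis .
qed

lemma gen_ric:
  fixes Pd Pm P A Q IEE :: "real^'n^'n" and B S D IEF :: "real^'m^'n"
    and R Sg IFF :: "real^'m^'m" and K IFE :: "real^'n^'m" and C :: "real^'n^'n"
  assumes KR: "transpose K ** R = S" and RK: "R ** K = transpose S"
    and Sg: "Sg = R + transpose D ** P ** D + IFF"
    and SI1: "Sg ** Si = mat 1" and SI2: "Si ** Sg = mat 1"
  shows
 "Pd + Pm ** (A - B ** K) + transpose (A - B ** K) ** Pm + transpose (C - D ** K) ** P ** (C - D ** K)
   + (IEE - IEF ** K - transpose K ** IFE + transpose K ** IFF ** K) + (Q - S ** K)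
  - (Pm ** B + transpose (C - D ** K) ** P ** D + (IEF - transpose K ** IFF)) ** Si
     ** (transpose B ** Pm + transpose D ** P ** (C - D ** K) + (IFE - IFF ** K))
 = Pd + Pm ** A + transpose A ** Pm + transpose C ** P ** C + IEE + Q
  - (S + Pm ** B + transpose C ** P ** D + IEF) ** Si
     ** (transpose S + transpose B ** Pm + transpose D ** P ** C + IFE)"
proof -
  define L where "L = S + Pm ** B + transpose C ** P ** D + IEF"
  define M where "M = transpose S + transpose B ** Pm + transpose D ** P ** C + IFE"
  have L': "Pm ** B + transpose (C - D ** K) ** P ** D + (IEF - transpose K ** IFF) = L - transpose K ** Sg"
    unfolding L_def Sg by (simp add: mm_simps KR)
  have M': "transpose B ** Pm + transpose D ** P ** (C - D ** K) + (IFE - IFF ** K) = M - Sg ** K"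
    unfolding M_def Sg by (simp add: mm_simps RK)
  have a1: "transpose K ** Sg ** Si = transpose K"
    by (metis SI1 matrix_mul_assoc matrix_mul_rid)
  have a2: "L ** Si ** Sg = L"
    by (metis SI2 matrix_mul_assoc matrix_mul_rid)
  have Q': "(L - transpose K ** Sg) ** Si ** (M - Sg ** K) = L ** Si ** M - L ** K - transpose K ** M + transpose K ** Sg ** K"
    by (simp add: mm_simps a1 a2)
  have KS: "transpose K ** transpose S = S ** K"
    by (metis RK KR matrix_mul_assoc)
  show ?thesis
    unfolding L' M' Q' unfolding L_def M_def Sg
    by (simp add: mm_simps KR KS algebra_simps)
qed

definition sqi :: "real measure \<Rightarrow> (real \<Rightarrow> 'a::euclidean_space) \<Rightarrow> bool" where
  "sqi M X \<longleftrightarrow> X \<in> borel_measurable M \<and> (\<integral>\<^sup>+x. ennreal ((norm (X x))\<^sup>2) \<partial>M) < \<infinity>"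

lemma sqi_add: "sqi M X \<Longrightarrow> sqi M Y \<Longrightarrow> sqi M (\<lambda>x. X x + Y x)"
  unfolding sqi_def using sq_add by (auto intro!: borel_measurable_add)

lemma sqi_int: "sqi M X \<Longrightarrow> sqi M Y \<Longrightarrow>
  integrable M (\<lambda>x. transpose (X x :: real^'m^'n) ** (P::real^'n^'n) ** (Y x :: real^'p^'n))"
  unfolding sqi_def using bil_integrable[OF bb_P, of X M Y P] by auto

lemma sqi_L2: "L2nu \<nu> T X \<Longrightarrow> t \<in> {0..T} \<Longrightarrow> sqi \<nu> (X t)"
  unfolding sqi_def using L2nu_sec by blast

lemma sym_inv:
  assumes "invertible (R::real^'m^'m)" "transpose R = R"
  shows "transpose (matrix_inv R) ** R = mat 1"
proof -
  have "transpose (matrix_inv R) ** R = transpose (transpose R ** matrix_inv R)"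
    by (simp add: matrix_transpose_mul)
  also have "\<dots> = mat 1" using minv(1)[OF assms(1)] assms(2) by simp
  finally show ?thesis .
qed

lemma KR_lem:
  assumes "invertible (R::real^'m^'m)" "transpose R = R"
  shows "transpose (matrix_inv R ** transpose S) ** R = S"
    and "R ** (matrix_inv R ** transpose S) = transpose S"
proof -
  show "transpose (matrix_inv R ** transpose S) ** R = S"
    using sym_inv[OF assms] by (simp add: matrix_transpose_mul matrix_mul_assoc[symmetric])
  show "R ** (matrix_inv R ** transpose S) = transpose S"
    using minv(1)[OF assms(1)] by (simp add: matrix_mul_assoc)
qed

theorem lemma3p3:
  fixes T :: real and \<nu> :: "real measure"
    and c :: "('n::finite, 'm::finite) coef" and w :: "('n, 'm) wt"
  assumes "T > 0"
    and "space \<nu> \<noteq> {}" and "0 \<notin> space \<nu>"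
    and "sets \<nu> = sets (restrict_space borel (space \<nu>))"
    and "sigma_finite_measure \<nu>"
    and "(\<integral>\<^sup>+\<theta>. ennreal (min 1 (\<theta>\<^sup>2)) \<partial>\<nu>) < \<infinity>"
    and "coef_tuple \<nu> T c" and "weight_tuple T w"
    and "assumption_S T w"
  shows "wG (wt1 w) = wG w \<and> wG (wt1 w) + wGb (wt1 w) = wG w + wGb w \<and>
    (\<forall>t\<in>{0..T}. \<forall>Pd P Pid Pm.
       symmetric_mat P \<longrightarrow> symmetric_mat Pm \<longrightarrow>
       invertible (Sig0 \<nu> c w t P) \<longrightarrow> invertible (Sig1 \<nu> c w t P) \<longrightarrow>
       ric1 \<nu> (coef1 c w) (wt1 w) t Pd P = ric1 \<nu> c w t Pd P \<and>
       ric2 \<nu> (coef1 c w) (wt1 w) t Pid P Pm = ric2 \<nu> c w t Pid P Pm)"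
proof (intro conjI ballI allI impI)
  show "wG (wt1 w) = wG w" "wG (wt1 w) + wGb (wt1 w) = wG w + wGb w"
    by (simp_all add: wt1_def Let_def)
next
  fix t Pd P Pid Pm
  assume t: "t \<in> {0..T}" and i0: "invertible (Sig0 \<nu> c w t P)" and i1: "invertible (Sig1 \<nu> c w t P)"
  obtain a where a: "a > 0" "loewner_ge (wR w t) (a *\<^sub>R mat 1)" "loewner_ge (wR w t + wRb w t) (a *\<^sub>R mat 1)"
    using assms(9) t unfolding assumption_S_def by blast
  have iR: "invertible (wR w t)" using inv_psd a by blast
  have iR2: "invertible (wR w t + wRb w t)" using inv_psd a by blast
  have sR: "transpose (wR w t) = wR w t" "transpose (wRb w t) = wRb w t"
    using assms(8) t unfolding weight_tuple_def symmetric_mat_def by auto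
  have sR2: "transpose (wR w t + wRb w t) = wR w t + wRb w t" using sR by (simp add: tr_add)
  have ct: "L2nu \<nu> T (cE c)" "L2nu \<nu> T (cEb c)" "L2nu \<nu> T (cF c)" "L2nu \<nu> T (cFb c)"
    using assms(7) unfolding coef_tuple_def by auto
  have qE: "sqi \<nu> (cE c t)" and qF: "sqi \<nu> (cF c t)"
    using sqi_L2[OF ct(1) t] sqi_L2[OF ct(3) t] by auto
  have qE2: "sqi \<nu> (\<lambda>x. cE c t x + cEb c t x)" and qF2: "sqi \<nu> (\<lambda>x. cF c t x + cFb c t x)"
    using sqi_add[OF qE sqi_L2[OF ct(2) t]] sqi_add[OF qF sqi_L2[OF ct(4) t]] by auto
  define K where "K = matrix_inv (wR w t) ** transpose (wS w t)"
  define K2 where "K2 = matrix_inv (wR w t + wRb w t) ** transpose (wS w t + wSb w t)"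
  note KR1 = KR_lem[OF iR sR(1), of "wS w t", folded K_def]
  note KR2 = KR_lem[OF iR2 sR2, of "wS w t + wSb w t", folded K2_def]
  have s0: "Sig0 \<nu> (coef1 c w) (wt1 w) t P = Sig0 \<nu> c w t P"
    by (simp add: Sig0_def coef1_def wt1_def Let_def)
  have s1: "Sig1 \<nu> (coef1 c w) (wt1 w) t P = Sig1 \<nu> c w t P"
    by (simp add: Sig1_def coef1_def wt1_def Let_def)
  have c1: "cA (coef1 c w) t = cA c t - cB c t ** K"
     "cC (coef1 c w) t = cC c t - cD c t ** K"
     "\<And>x. cE (coef1 c w) t x = cE c t x - cF c t x ** K"
     "cB (coef1 c w) = cB c" "cD (coef1 c w) = cD c" "cF (coef1 c w) = cF c"
     "cBb (coef1 c w) = cBb c" "cDb (coef1 c w) = cDb c" "cFb (coef1 c w) = cFb c"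
     "wQ (wt1 w) t = wQ w t - wS w t ** K" "wS (wt1 w) t = 0" "wSb (wt1 w) t = 0"
    by (simp_all add: coef1_def wt1_def Let_def K_def matrix_mul_assoc)
  have c2: "cA (coef1 c w) t + cAb (coef1 c w) t = (cA c t + cAb c t) - (cB c t + cBb c t) ** K2"
     "cC (coef1 c w) t + cCb (coef1 c w) t = (cC c t + cCb c t) - (cD c t + cDb c t) ** K2"
     "\<And>x. cE (coef1 c w) t x + cEb (coef1 c w) t x = (cE c t x + cEb c t x) - (cF c t x + cFb c t x) ** K2"
     "wQ (wt1 w) t + wQb (wt1 w) t = (wQ w t + wQb w t) - (wS w t + wSb w t) ** K2"
    by (simp_all add: coef1_def wt1_def Let_def K2_def matrix_mul_assoc)
  note ie1 = int_expand[of \<nu> "cE c t" P "cF c t" K, OF sqi_int[OF qE qE] sqi_int[OF qE qF] sqi_int[OF qF qE] sqi_int[OF qF qF]]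
  note ie2 = int_expand[of \<nu> "\<lambda>x. cE c t x + cEb c t x" P "\<lambda>x. cF c t x + cFb c t x" K2,
     OF sqi_int[OF qE2 qE2] sqi_int[OF qE2 qF2] sqi_int[OF qF2 qE2] sqi_int[OF qF2 qF2]]
  note G1 = gen_ric[OF KR1 Sig0_def[of \<nu> c w t P] minv[OF i0]]
  show "ric1 \<nu> (coef1 c w) (wt1 w) t Pd P = ric1 \<nu> c w t Pd P"
    unfolding ric1_def s0
    apply (simp only: c1 ie1 tr_zero add_0_left)
    apply (rule G1)
    done
  note G2 = gen_ric[OF KR2 Sig1_def[of \<nu> c w t P] minv[OF i1]]
  have q1: "\<And>X. X + wQ (wt1 w) t + wQb (wt1 w) t = X + ((wQ w t + wQb w t) - (wS w t + wSb w t) ** K2)"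
    by (simp only: add.assoc c2(4))
  have q2: "\<And>X. X + wQ w t + wQb w t = X + (wQ w t + wQb w t)"
    by (simp only: add.assoc)
  show "ric2 \<nu> (coef1 c w) (wt1 w) t Pid P Pm = ric2 \<nu> c w t Pid P Pm"
    unfolding ric2_def s1
    apply (simp only: c2 q1 q2)
    apply (simp only: c1 ie2 tr_zero add_0_left)
    apply (rule G2)
    done
qed

end
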